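(* Let $W$ be an eventually periodic subset of $\mathbb{Z}^d$ with periods $u_1,\dots,u_d$, and let $\mathscr{W}_1,\mathcal{W}$ be as defined in the context. If the ordered pair $(\pi(\mathscr{W}_1),\pi(\mathcal{W}))$ admits a minimal complement in $\mathbb{Z}^d/\mathcal{L}$, then $W$ has a minimal complement in $\mathbb{Z}^d$.
   Context: $d\geqslant1$, $\mathbb{N}=\{0,1,2,\dots\}$. Let $u_1,\dots,u_d\in\mathbb{Z}^d$ satisfy no nontrivial $\mathbb{Z}$-linear relation, $\mathcal{L}=\mathbb{Z}u_1+\dots+\mathbb{Z}u_d$, $P=\mathbb{N}u_1+\dots+\mathbb{N}u_d$, $\pi:\mathbb{Z}^d\to\mathbb{Z}^d/\mathcal{L}$ the quotient map. A nonempty $X\subseteq\mathbb{Z}^d$ is eventually periodic with periods $u_1,\dots,u_d$ if $X\subseteq F+P$ for some nonempty finite $F\subseteq\mathbb{Z}^d$ and $x+P\subseteq X$ for all but finitely many $x\in X$. For such $W$: $\mathscr{W}=\{w\in W:w+P\not\subseteq W\}$; $\mathcal{W}=\{w\in W\setminus\mathscr{W}:(w-P)\cap(W\setminus\mathscr{W})=\{w\}\}$; $\mathscr{W}_1$ is the set of elements of $\mathscr{W}$ congruent modulo $\mathcal{L}$ to no element of $\mathcal{W}$. An ordered pair $(\mathscr{Q}_1,\mathcal{Q})$ of two nonempty disjoint subsets of $\mathbb{Z}^d/\mathcal{L}$ admits a minimal complement in $\mathbb{Z}^d/\mathcal{L}$ if there is a nonempty $\mathcal{N}\subseteq\mathbb{Z}^d/\mathcal{L}$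 with (i) $\mathcal{N}+(\mathcal{Q}\cup\mathscr{Q}_1)=\mathbb{Z}^d/\mathcal{L}$ and (ii) for every $n\in\mathcal{N}$ there is $q\in\mathscr{Q}_1$ with $n+q\neq n'+q'$ for all $n'\in\mathcal{N}\setminus\{n\}$, $q'\in\mathcal{Q}\cup\mathscr{Q}_1$. A nonempty $M\subseteq\mathbb{Z}^d$ is a complement of $W$ if $M+W=\mathbb{Z}^d$, and a minimal complement if no proper subset of $M$ is a complement of $W$. *)

theory Defs
  imports "HOL-Analysis.Analysis"
begin

text \<open>Z^d is modelled as int^'d for a finite index type 'd (d = CARD('d) >= 1).
  The periods u_1..u_d are a family u :: 'd => int^'d.\<close>

definition zlin_indep :: "('d::finite \<Rightarrow> int^'d) \<Rightarrow> bool" where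
  "zlin_indep u \<longleftrightarrow> (\<forall>c::'d \<Rightarrow> int. (\<Sum>i\<in>UNIV. c i *s u i) = 0 \<longrightarrow> (\<forall>i. c i = 0))"

definition latt :: "('d::finite \<Rightarrow> int^'d) \<Rightarrow> (int^'d) set" where
  "latt u = {\<Sum>i\<in>UNIV. c i *s u i | c. True}"

definition cone :: "('d::finite \<Rightarrow> int^'d) \<Rightarrow> (int^'d) set" where
  "cone u = {\<Sum>i\<in>UNIV. c i *s u i | c. \<forall>i. c i \<ge> 0}"

definition setsum :: "('a::plus) set \<Rightarrow> 'a set \<Rightarrow> 'a set" where
  "setsum A B = {a + b | a b. a \<in> A \<and> b \<in> B}"

definition qmap :: "('d::finite \<Rightarrow> int^'d) \<Rightarrow> int^'d \<Rightarrow> (int^'d) set" where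
  "qmap u x = (\<lambda>l. x + l) ` latt u"

definition quot :: "('d::finite \<Rightarrow> int^'d) \<Rightarrow> (int^'d) set set" where
  "quot u = range (qmap u)"

definition eventually_periodic :: "('d::finite \<Rightarrow> int^'d) \<Rightarrow> (int^'d) set \<Rightarrow> bool" where
  "eventually_periodic u X \<longleftrightarrow> X \<noteq> {} \<and>
     (\<exists>F. finite F \<and> F \<noteq> {} \<and> X \<subseteq> setsum F (cone u)) \<and>
     finite {x \<in> X. \<not> ((\<lambda>p. x + p) ` cone u \<subseteq> X)}"

definition scrW :: "('d::finite \<Rightarrow> int^'d) \<Rightarrow> (int^'d) set \<Rightarrow> (int^'d) set" where
  "scrW u W = {w \<in> W. \<not> ((\<lambda>p. w + p) ` cone u \<subseteq> W)}"

definition calW :: "('d::finite \<Rightarrow> int^'d) \<Rightarrow> (int^'d) set \<Rightarrow> (int^'d) set" where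
  "calW u W = {w \<in> W - scrW u W. (\<lambda>p. w - p) ` cone u \<inter> (W - scrW u W) = {w}}"

definition scrW1 :: "('d::finite \<Rightarrow> int^'d) \<Rightarrow> (int^'d) set \<Rightarrow> (int^'d) set" where
  "scrW1 u W = {w \<in> scrW u W. \<forall>v \<in> calW u W. w - v \<notin> latt u}"

text \<open>Ordered pair (Q1, Q) of nonempty disjoint subsets of Z^d/L admitting a minimal
  complement; the sum of classes is the Minkowski sum of cosets.\<close>
definition admits_min_compl_quot ::
  "('d::finite \<Rightarrow> int^'d) \<Rightarrow> (int^'d) set set \<Rightarrow> (int^'d) set set \<Rightarrow> bool" where
  "admits_min_compl_quot u Q1 Q \<longleftrightarrow>
     Q1 \<subseteq> quot u \<and> Q \<subseteq> quot u \<and> Q1 \<noteq> {} \<and> Q \<noteq> {} \<and> Q1 \<inter> Q = {} \<and>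
     (\<exists>N. N \<noteq> {} \<and> N \<subseteq> quot u \<and>
        {setsum n q | n q. n \<in> N \<and> q \<in> Q \<union> Q1} = quot u \<and>
        (\<forall>n\<in>N. \<exists>q\<in>Q1. \<forall>n'\<in>N - {n}. \<forall>q'\<in>Q \<union> Q1. setsum n q \<noteq> setsum n' q'))"

definition is_complement :: "('a::plus) set \<Rightarrow> 'a set \<Rightarrow> bool" where
  "is_complement M W \<longleftrightarrow> M \<noteq> {} \<and> setsum M W = UNIV"

definition is_min_complement :: "('a::plus) set \<Rightarrow> 'a set \<Rightarrow> bool" where
  "is_min_complement M W \<longleftrightarrow> is_complement M W \<and> (\<forall>M'. M' \<subset> M \<longrightarrow> \<not> is_complement M' W)"

end

theory Submission
  imports Defs
begin
abbreviation lc :: "('d::finite \<Rightarrow> int^'d) \<Rightarrow> ('d \<Rightarrow> int) \<Rightarrow> int^'d" where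
  "lc u c \<equiv> (\<Sum>i\<in>UNIV. c i *s u i)"

lemma lc_add: "lc u a + lc u b = lc u (\<lambda>i. a i + b i)"
  by (simp add: sum.distrib vector_sadd_rdistrib)

lemma lc_diff: "lc u a - lc u b = lc u (\<lambda>i. a i - b i)"
  by (simp add: sum_subtractf vector_sub_rdistrib)

lemma lc_zero: "lc u (\<lambda>i. 0) = 0"
  by simp

lemma lc_scale: "k *s lc u a = lc u (\<lambda>i. k * a i)"
proof -
  have "(\<Sum>i\<in>UNIV. k *s (a i *s u i)) = k *s lc u a" by (rule sum_cmul)
  then show ?thesis by (simp add: vector_smult_assoc)
qed

lemma lc_inj:
  fixes u :: "'d::finite \<Rightarrow> int^'d" and a b :: "'d \<Rightarrow> int"
  assumes "zlin_indep u" "lc u a = lc u b" shows "a = b"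
proof -
  have h: "lc u (\<lambda>i. a i - b i) = 0" using assms(2) lc_diff[where u=u and a=a and b=b] by simp
  have H: "lc u (\<lambda>i. a i - b i) = 0 \<longrightarrow> (\<forall>i. a i - b i = 0)"
    using assms(1) unfolding zlin_indep_def by (rule spec)
  have "\<forall>i. a i - b i = 0" using H h by (rule mp)
  then show ?thesis by auto
qed

lemma latt_iff: "x \<in> latt u \<longleftrightarrow> (\<exists>c. x = lc u c)"
  unfolding latt_def by auto

lemma cone_iff: "x \<in> cone u \<longleftrightarrow> (\<exists>c. (\<forall>i. c i \<ge> 0) \<and> x = lc u c)"
  unfolding cone_def by auto

lemma latt_add: assumes "x \<in> latt u" "y \<in> latt u" shows "x + y \<in> latt u"
proof -
  obtain a b where "x = lc u a" "y = lc u b" using assms unfolding latt_iff by blast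
  then have "x + y = lc u (\<lambda>i. a i + b i)" by (simp only: lc_add)
  then show ?thesis unfolding latt_iff by (rule exI[of _ "\<lambda>i. a i + b i"])
qed

lemma latt_diff: assumes "x \<in> latt u" "y \<in> latt u" shows "x - y \<in> latt u"
proof -
  obtain a b where "x = lc u a" "y = lc u b" using assms unfolding latt_iff by blast
  then have "x - y = lc u (\<lambda>i. a i - b i)" by (simp only: lc_diff)
  then show ?thesis unfolding latt_iff by (rule exI[of _ "\<lambda>i. a i - b i"])
qed

lemma latt_zero: "0 \<in> latt u"
  unfolding latt_iff by (rule exI[of _ "\<lambda>i. 0"]) (rule lc_zero[symmetric])

lemma latt_neg: assumes "x \<in> latt u" shows "- x \<in> latt u"
proof -
  have "0 - x \<in> latt u" using latt_diff[OF latt_zero assms] .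
  then show ?thesis by simp
qed

lemma latt_scale: assumes "x \<in> latt u" shows "k *s x \<in> latt u"
proof -
  obtain a where "x = lc u a" using assms unfolding latt_iff by blast
  then have "k *s x = lc u (\<lambda>i. k * a i)" by (simp only: lc_scale)
  then show ?thesis unfolding latt_iff by (rule exI[of _ "\<lambda>i. k * a i"])
qed

lemma cone_latt: "x \<in> cone u \<Longrightarrow> x \<in> latt u"
  unfolding latt_iff cone_iff by blast

lemma cone_add: "x \<in> cone u \<Longrightarrow> y \<in> cone u \<Longrightarrow> x + y \<in> cone u"
  unfolding cone_iff
proof (elim exE conjE)
  fix a b assume "\<forall>i. 0 \<le> a i" "x = lc u a" "\<forall>i. 0 \<le> b i" "y = lc u b"
  then show "\<exists>c. (\<forall>i. 0 \<le> c i) \<and> x + y = lc u c"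
    by (intro exI[of _ "\<lambda>i. a i + b i"]) (simp add: lc_add add_nonneg_nonneg)
qed

lemma cone_zero: "0 \<in> cone u"
  unfolding cone_iff by (intro exI[of _ "\<lambda>i. 0"]) simp

lemma latt_u: "u i \<in> latt u"
proof -
  have "\<And>j. (if j = i then 1 else 0) *s u j = (if j = i then u i else 0)" by simp
  then have "lc u (\<lambda>j. if j = i then 1 else 0) = u i" by simp
  then show ?thesis unfolding latt_iff by (metis (no_types))
qed

lemma qmap_eq_iff: "qmap u a = qmap u b \<longleftrightarrow> a - b \<in> latt u"
proof
  assume h: "qmap u a = qmap u b"
  have "a \<in> qmap u a" unfolding qmap_def using latt_zero by force
  then have "a \<in> qmap u b" using h by simp
  then obtain l where "l \<in> latt u" "a = b + l" unfolding qmap_def by auto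
  then show "a - b \<in> latt u" by simp
next
  assume h: "a - b \<in> latt u"
  show "qmap u a = qmap u b"
  proof (unfold qmap_def, rule set_eqI, rule iffI)
    fix x assume "x \<in> (+) a ` latt u"
    then obtain l where l: "l \<in> latt u" "x = a + l" by auto
    have "a - b + l \<in> latt u" using latt_add[OF h l(1)] .
    then show "x \<in> (+) b ` latt u" using l by (intro image_eqI[of _ _ "a - b + l"]) auto
  next
    fix x assume "x \<in> (+) b ` latt u"
    then obtain l where l: "l \<in> latt u" "x = b + l" by auto
    have "l - (a - b) \<in> latt u" using latt_diff[OF l(1) h] .
    then show "x \<in> (+) a ` latt u" using l by (intro image_eqI[of _ _ "l - (a - b)"]) auto
  qed
qed

lemma setsum_qmap: "setsum (qmap u a) (qmap u b) = qmap u (a + b)"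
proof (rule set_eqI, rule iffI)
  fix x assume "x \<in> setsum (qmap u a) (qmap u b)"
  then obtain l1 l2 where "l1 \<in> latt u" "l2 \<in> latt u" "x = (a + l1) + (b + l2)"
    unfolding setsum_def qmap_def by auto
  then show "x \<in> qmap u (a + b)" unfolding qmap_def
    by (intro image_eqI[of _ _ "l1 + l2"]) (auto simp: latt_add algebra_simps)
next
  fix x assume "x \<in> qmap u (a + b)"
  then obtain l where l: "l \<in> latt u" "x = a + b + l" unfolding qmap_def by auto
  have 1: "a + l \<in> qmap u a" using l(1) unfolding qmap_def by blast
  have 2: "b \<in> qmap u b" using latt_zero unfolding qmap_def by force
  have 3: "x = (a + l) + b" using l(2) by (simp add: algebra_simps)
  show "x \<in> setsum (qmap u a) (qmap u b)" unfolding setsum_def using 1 2 3 by blast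
qed

lemma det_Ints:
  fixes A :: "rat^'n::finite^'n"
  assumes "\<And>i j. A$i$j \<in> \<int>" shows "det A \<in> \<int>"
  unfolding det_def by (intro Ints_sum Ints_mult Ints_prod Ints_of_int assms)

lemma rat_clear_denom:
  fixes z :: "rat^'d::finite"
  shows "\<exists>den::int. den > 0 \<and> (\<forall>j. of_int den * z$j \<in> \<int>)"
proof -
  define den where "den = (\<Prod>j\<in>UNIV. snd (quotient_of (z$j)))"
  have pos: "den > 0" unfolding den_def by (intro prod_pos) (simp add: quotient_of_denom_pos')
  have "of_int den * z$j \<in> \<int>" for j
  proof -
    obtain a b where ab: "quotient_of (z$j) = (a, b)" by (cases "quotient_of (z$j)") auto
    have bpos: "b > 0" using quotient_of_denom_pos[OF ab] .
    have zj: "z$j = of_int a / of_int b" using quotient_of_div[OF ab] .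
    have "den = snd (quotient_of (z$j)) * (\<Prod>j'\<in>UNIV - {j}. snd (quotient_of (z$j')))"
      unfolding den_def by (simp add: prod.remove)
    then have "den = b * (\<Prod>j'\<in>UNIV - {j}. snd (quotient_of (z$j')))" using ab by simp
    then have "of_int den * z$j = of_int a * of_int (\<Prod>j'\<in>UNIV - {j}. snd (quotient_of (z$j')))"
      using bpos zj by simp
    then show ?thesis by (metis Ints_mult Ints_of_int)
  qed
  then show ?thesis using pos by blast
qed

lemma Ints_choice:
  fixes f :: "'a \<Rightarrow> rat"
  assumes "\<And>j. f j \<in> \<int>" shows "\<exists>c. \<forall>j. of_int (c j) = f j"
proof -
  have "\<forall>j. \<exists>t. of_int t = f j" using assms by (metis Ints_cases)
  then show ?thesis by metis
qed

lemma lc_comp: "(lc u c) $ i = (\<Sum>j\<in>UNIV. c j * u j $ i)"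
  by (simp add: sum_component)

lemma full_rank:
  fixes u :: "'d::finite \<Rightarrow> int^'d"
  assumes zi: "zlin_indep u"
  shows "\<exists>D>0. \<forall>g. D *s g \<in> latt u"
proof -
  define U :: "rat^'d^'d" where "U = (\<chi> i j. of_int (u j $ i))"
  have Ux: "(U *v x) $ i = (\<Sum>j\<in>UNIV. of_int (u j $ i) * x$j)" for x i
    unfolding U_def matrix_vector_mult_def by simp
  have ker: "z = 0" if hz: "U *v z = 0" for z
  proof -
    obtain den :: int where den: "den > 0" "\<And>j. of_int den * z$j \<in> \<int>"
      using rat_clear_denom[of z] by blast
    obtain c where c: "\<And>j. of_int (c j) = of_int den * z$j" using Ints_choice[of "\<lambda>j. of_int den * z$j"] den(2) by blast
    have "lc u c = 0"
    proof (subst vec_eq_iff, intro allI)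
      fix i
      have "(of_int ((lc u c) $ i) :: rat) = (\<Sum>j\<in>UNIV. of_int (c j) * of_int (u j $ i))"
        by (simp add: lc_comp)
      also have "\<dots> = of_int den * (U *v z) $ i"
        by (simp add: Ux c sum_distrib_left algebra_simps)
      also have "\<dots> = 0" using hz by simp
      finally have "(of_int ((lc u c) $ i) :: rat) = 0" .
      then have "(lc u c) $ i = 0" by (simp only: of_int_eq_0_iff)
      then show "(lc u c) $ i = 0 $ i" by simp
    qed
    then have "\<forall>j. c j = 0" using zi unfolding zlin_indep_def by blast
    then have "\<forall>j. z$j = 0" using c den(1) by (metis mult_eq_0_iff of_int_0 of_int_eq_0_iff less_irrefl)
    then show ?thesis by (simp add: vec_eq_iff)
  qed
  have "inj ((*v) U)"
  proof (rule injI)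
    fix x y assume "U *v x = U *v y"
    then have "U *v (x - y) = 0" by (simp add: matrix_vector_mult_diff_distrib)
    then show "x = y" using ker by fastforce
  qed
  then have dU: "det U \<noteq> 0"
    using det_nz_iff_inj_gen[OF matrix_vector_mul_linear_gen[of U]]
    by (simp add: matrix_of_matrix_vector_mul)
  have "det U \<in> \<int>" by (rule det_Ints) (simp add: U_def)
  then obtain D0 where D0: "det U = of_int D0" by (metis Ints_cases)
  have D0nz: "D0 \<noteq> 0" using dU D0 by auto
  have gen: "D0 *s g \<in> latt u" for g
  proof -
    define b :: "rat^'d" where "b = (\<chi> i. of_int (g$i))"
    define x :: "rat^'d" where "x = (\<chi> k. det(\<chi> i j. if j=k then b$i else U$i$j) / det U)"
    have Uxb: "U *v x = b" using cramer[OF dU, of x b] x_def by simp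
    have "of_int D0 * x$k \<in> \<int>" for k
    proof -
      have "of_int D0 * x$k = det(\<chi> i j. if j=k then b$i else U$i$j)"
        using D0 dU by (simp add: x_def)
      also have "\<dots> \<in> \<int>" by (rule det_Ints) (simp add: U_def b_def)
      finally show ?thesis .
    qed
    then obtain c where c: "\<And>k. of_int (c k) = of_int D0 * x$k" using Ints_choice[of "\<lambda>k. of_int D0 * x$k"] by blast
    have "lc u c = D0 *s g"
    proof (subst vec_eq_iff, intro allI)
      fix i
      have "(of_int ((lc u c) $ i) :: rat) = (\<Sum>j\<in>UNIV. of_int (c j) * of_int (u j $ i))"
        by (simp add: lc_comp)
      also have "\<dots> = of_int D0 * (U *v x) $ i"
        by (simp add: Ux c sum_distrib_left algebra_simps)
      also have "\<dots> = of_int (D0 * g$i)" using Uxb by (simp add: b_def)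
      finally have "(of_int ((lc u c) $ i) :: rat) = of_int (D0 * g$i)" .
      then have "(lc u c) $ i = D0 * g$i" by (simp only: of_int_eq_iff)
      then show "(lc u c) $ i = (D0 *s g) $ i" by simp
    qed
    then show ?thesis unfolding latt_iff by metis
  qed
  show ?thesis
  proof (cases "D0 > 0")
    case True then show ?thesis using gen by blast
  next
    case False
    then have "- D0 > 0" using D0nz by simp
    moreover have "(- D0) *s g \<in> latt u" for g
    proof -
      have "(- D0) *s g = D0 *s (- g)" by (simp add: vec_eq_iff)
      then show ?thesis using gen[of "- g"] by simp
    qed
    ultimately show ?thesis by blast
  qed
qed

lemma wf_min:
  fixes u :: "'d::finite \<Rightarrow> int^'d" and W :: "(int^'d) set"
  assumes zi: "zlin_indep u" and ep: "eventually_periodic u W"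
    and w: "w \<in> W - scrW u W"
  shows "\<exists>v \<in> calW u W. w - v \<in> cone u"
proof -
  obtain F where F: "finite F" "W \<subseteq> setsum F (cone u)"
    using ep unfolding eventually_periodic_def by blast
  define E where "E f = (SOME e. (\<forall>i. e i \<ge> 0) \<and> w - f = lc u e)" for f
  define B where "B = (\<Sum>f\<in>F. nat (\<Sum>i\<in>UNIV. E f i))"
  define \<Phi> where "\<Phi> t \<longleftrightarrow> (\<exists>x a. x \<in> W - scrW u W \<and> (\<forall>i. a i \<ge> 0) \<and> w - x = lc u a
      \<and> t = nat (\<Sum>i\<in>UNIV. a i))" for t
  have "\<Phi> 0" unfolding \<Phi>_def using w by (intro exI[of _ w] exI[of _ "\<lambda>i. 0"]) simp
  moreover have "\<forall>t. \<Phi> t \<longrightarrow> t \<le> B"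
  proof (intro allI impI)
    fix t assume "\<Phi> t"
    then obtain x a where xa: "x \<in> W - scrW u W" "\<forall>i. a i \<ge> 0" "w - x = lc u a"
      "t = nat (\<Sum>i\<in>UNIV. a i)" unfolding \<Phi>_def by blast
    then have "x \<in> setsum F (cone u)" using F(2) by blast
    then obtain f p where fp: "f \<in> F" "p \<in> cone u" "x = f + p" unfolding setsum_def by blast
    then obtain b where b: "\<forall>i. b i \<ge> 0" "p = lc u b" unfolding cone_iff by blast
    have wf: "w - f = lc u (\<lambda>i. a i + b i)"
      using xa(3) fp(3) b(2) lc_add[where u=u and a=a and b=b] by (simp add: algebra_simps)
    have ex: "\<exists>e. (\<forall>i. e i \<ge> 0) \<and> w - f = lc u e"
      using wf xa(2) b(1) by (intro exI[of _ "\<lambda>i. a i + b i"]) (simp add: add_nonneg_nonneg)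
    have Ef: "(\<forall>i. E f i \<ge> 0) \<and> w - f = lc u (E f)"
      unfolding E_def using someI_ex[OF ex] .
    have "lc u (E f) = lc u (\<lambda>i. a i + b i)" using Ef wf by simp
    then have "E f = (\<lambda>i. a i + b i)" by (rule lc_inj[OF zi])
    then have "(\<Sum>i\<in>UNIV. a i) \<le> (\<Sum>i\<in>UNIV. E f i)"
      using b(1) by (simp add: sum_mono)
    then have "t \<le> nat (\<Sum>i\<in>UNIV. E f i)" using xa(4) by simp
    also have "\<dots> \<le> B" unfolding B_def
      using member_le_sum[of f F "\<lambda>f. nat (\<Sum>i\<in>UNIV. E f i)"] fp(1) F(1) by simp
    finally show "t \<le> B" .
  qed
  ultimately have "\<exists>t. \<Phi> t \<and> (\<forall>y. \<Phi> y \<longrightarrow> y \<le> t)"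
    by (rule Nat.ex_has_greatest_nat)
  then obtain t where t: "\<Phi> t" "\<forall>y. \<Phi> y \<longrightarrow> y \<le> t" by (elim exE conjE)
  then obtain x a where xa: "x \<in> W - scrW u W" "\<forall>i. a i \<ge> 0" "w - x = lc u a"
      "t = nat (\<Sum>i\<in>UNIV. a i)" unfolding \<Phi>_def by blast
  have "(\<lambda>p. x - p) ` cone u \<inter> (W - scrW u W) = {x}"
  proof
    show "{x} \<subseteq> (\<lambda>p. x - p) ` cone u \<inter> (W - scrW u W)"
      using xa(1) cone_zero by force
  next
    show "(\<lambda>p. x - p) ` cone u \<inter> (W - scrW u W) \<subseteq> {x}"
    proof
      fix y assume "y \<in> (\<lambda>p. x - p) ` cone u \<inter> (W - scrW u W)"
      then obtain p where p: "p \<in> cone u" "y = x - p" "y \<in> W - scrW u W" by blast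
      then obtain b where b: "\<forall>i. b i \<ge> 0" "p = lc u b" unfolding cone_iff by blast
      have "w - y = (w - x) + p" using p(2) by simp
      also have "\<dots> = lc u a + lc u b" using xa(3) b(2) by simp
      also have "\<dots> = lc u (\<lambda>i. a i + b i)" by (rule lc_add)
      finally have wy: "w - y = lc u (\<lambda>i. a i + b i)" .
      have "\<Phi> (nat (\<Sum>i\<in>UNIV. a i + b i))" unfolding \<Phi>_def
        using p(3) wy xa(2) b(1)
        by (intro exI[of _ y] exI[of _ "\<lambda>i. a i + b i"]) (simp add: add_nonneg_nonneg)
      then have "nat (\<Sum>i\<in>UNIV. a i + b i) \<le> nat (\<Sum>i\<in>UNIV. a i)" using t(2) xa(4) by blast
      moreover have "(\<Sum>i\<in>UNIV. a i) \<ge> 0" using xa(2) by (simp add: sum_nonneg)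
      moreover have "(\<Sum>i\<in>UNIV. b i) \<ge> 0" using b(1) by (simp add: sum_nonneg)
      moreover have "(\<Sum>i\<in>UNIV. a i + b i) = (\<Sum>i\<in>UNIV. a i) + (\<Sum>i\<in>UNIV. b i)"
        by (rule sum.distrib)
      ultimately have "(\<Sum>i\<in>UNIV. b i) = 0" by linarith
      then have "\<forall>i. b i = 0" using b(1) by (simp add: sum_nonneg_eq_0_iff)
      then have "p = 0" using b(2) by simp
      then show "y \<in> {x}" using p(2) by simp
    qed
  qed
  then have "x \<in> calW u W" unfolding calW_def using xa(1) by blast
  moreover have "w - x \<in> cone u" unfolding cone_iff using xa(2,3) by blast
  ultimately show ?thesis by blast
qed

locale LS =
  fixes u :: "'d::finite \<Rightarrow> int^'d" and W :: "(int^'d) set" and N :: "(int^'d) set set"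
    and D k :: int
  assumes zi: "zlin_indep u" and ep: "eventually_periodic u W"
    and Nq: "N \<subseteq> quot u"
    and cover: "{setsum n q | n q. n \<in> N \<and> q \<in> qmap u ` calW u W \<union> qmap u ` scrW1 u W} = quot u"
    and wit: "\<forall>n\<in>N. \<exists>q\<in>qmap u ` scrW1 u W. \<forall>n'\<in>N - {n}.
        \<forall>q'\<in>qmap u ` calW u W \<union> qmap u ` scrW1 u W. setsum n q \<noteq> setsum n' q'"
    and Dpos: "D > 0" and Dl: "\<And>g. D *s g \<in> latt u"
    and kcard: "k > int (card (scrW u W))"
    and kdiff: "\<And>a b i. a \<in> scrW u W \<Longrightarrow> b \<in> scrW u W \<Longrightarrow> \<bar>(a - b) $ i\<bar> < k"
begin

definition "c = D * k"

lemma kpos: "k > 0" using kcard by linarith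

lemma cpos: "c > 0" unfolding c_def using Dpos kpos by simp

lemma cl: "c *s v \<in> latt u"
proof -
  have "c *s v = D *s (k *s v)" unfolding c_def by (simp add: vector_smult_assoc)
  then show ?thesis using Dl[of "k *s v"] by simp
qed

lemma calW_W: "v \<in> calW u W \<Longrightarrow> p \<in> cone u \<Longrightarrow> v + p \<in> W"
  unfolding calW_def scrW_def by blast

lemma calW_W0: "v \<in> calW u W \<Longrightarrow> v \<in> W"
  unfolding calW_def by blast

lemma scrW_W: "v \<in> scrW u W \<Longrightarrow> v \<in> W"
  unfolding scrW_def by blast

lemma scrW1_W: "v \<in> scrW1 u W \<Longrightarrow> v \<in> W"
  unfolding scrW1_def scrW_def by blast

lemma finite_scrW: "finite (scrW u W)"
  using ep unfolding eventually_periodic_def scrW_def by blast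

lemma B: assumes "w \<in> W" "\<forall>v\<in>calW u W. w - v \<notin> latt u" shows "w \<in> scrW u W"
proof (rule ccontr)
  assume "w \<notin> scrW u W"
  then obtain v where "v \<in> calW u W" "w - v \<in> cone u" using wf_min[OF zi ep] assms(1) by blast
  then show False using assms(2) cone_latt by blast
qed

lemma A: assumes "w \<in> W" shows "qmap u w \<in> qmap u ` calW u W \<union> qmap u ` scrW1 u W"
proof (cases "\<exists>v\<in>calW u W. w - v \<in> latt u")
  case True
  then obtain v where "v \<in> calW u W" "qmap u w = qmap u v" using qmap_eq_iff by blast
  then show ?thesis by blast
next
  case False
  then have "w \<in> scrW u W" using B assms by blast
  then have "w \<in> scrW1 u W" using False unfolding scrW1_def by blast
  then show ?thesis by blast
qed

lemma P2: assumes "a \<in> scrW u W" "b \<in> scrW u W" "a - b = c *s v" shows "a = b"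
proof -
  have "v $ i = 0" for i
  proof (rule ccontr)
    assume nz: "v $ i \<noteq> 0"
    have "\<bar>(a - b) $ i\<bar> = c * \<bar>v $ i\<bar>" using assms(3) cpos by (simp add: abs_mult)
    also have "\<dots> \<ge> c" using nz cpos by simp
    finally have "\<bar>(a - b) $ i\<bar> \<ge> c" .
    moreover have "c \<ge> k" unfolding c_def using Dpos kpos by simp
    ultimately show False using kdiff[OF assms(1,2), of i] by linarith
  qed
  then have "v = 0" by (simp add: vec_eq_iff)
  then show ?thesis using assms(3) by simp
qed

end

context LS begin

definition "Box = {x :: int^'d. \<forall>i. 0 \<le> x$i \<and> x$i < c}"
definition "rep x = (\<chi> i. x$i mod c)"
definition "Per M \<longleftrightarrow> (\<forall>x\<in>M. \<forall>v. x + c *s v \<in> M)"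
definition "M0 = {x. qmap u x \<in> N}"
definition "Fam = {M. M \<subseteq> M0 \<and> Per M \<and> setsum M W = UNIV}"

lemma finite_Box: "finite Box"
proof -
  have "vec_nth ` Box \<subseteq> PiE UNIV (\<lambda>_. {0..<c})"
    unfolding Box_def by (auto simp: PiE_def extensional_def)
  then have "finite (vec_nth ` Box)" by (rule finite_subset) (simp add: finite_PiE)
  moreover have "inj_on vec_nth Box" by (simp add: inj_on_def vec_nth_inject)
  ultimately show ?thesis using finite_imageD by blast
qed

lemma rep_Box: "rep x \<in> Box"
  unfolding rep_def Box_def using cpos by simp

lemma rep_eq: "rep x = x + c *s (- (\<chi> i. x$i div c))"
  unfolding rep_def by (simp add: vec_eq_iff algebra_simps minus_div_mult_eq_mod)

lemma Per_rep: assumes "Per M" "x \<in> M" shows "rep x \<in> M"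
proof -
  have "x + c *s (- (\<chi> i. x$i div c)) \<in> M" using assms unfolding Per_def by blast
  then show ?thesis by (simp only: rep_eq)
qed

lemma M0_Fam: "M0 \<in> Fam"
proof -
  have "Per M0" unfolding Per_def M0_def
  proof (intro ballI allI)
    fix x v assume "x \<in> {x. qmap u x \<in> N}"
    moreover have "qmap u (x + c *s v) = qmap u x" unfolding qmap_eq_iff using cl by simp
    ultimately show "x + c *s v \<in> {x. qmap u x \<in> N}" by simp
  qed
  moreover have "setsum M0 W = UNIV"
  proof (rule set_eqI, rule iffI)
    fix g :: "int^'d"
    have "qmap u g \<in> quot u" unfolding quot_def by blast
    then have "qmap u g \<in> {setsum n q | n q. n \<in> N \<and> q \<in> qmap u ` calW u W \<union> qmap u ` scrW1 u W}"
      by (subst cover)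
    then obtain n q where nq: "n \<in> N" "q \<in> qmap u ` calW u W \<union> qmap u ` scrW1 u W"
      "qmap u g = setsum n q" by blast
    have "\<exists>b. b \<in> W \<and> q = qmap u b"
    proof (cases "q \<in> qmap u ` calW u W")
      case True then show ?thesis using calW_W0 by blast
    next
      case False then have "q \<in> qmap u ` scrW1 u W" using nq(2) by blast
      then show ?thesis using scrW1_W by blast
    qed
    then obtain b where b: "b \<in> W" "q = qmap u b" by blast
    obtain a where a: "n = qmap u a" using nq(1) Nq unfolding quot_def by blast
    have "qmap u g = qmap u (a + b)" using nq(3) a b(2) setsum_qmap by simp
    then have "(g - b) - a \<in> latt u" unfolding qmap_eq_iff by (simp add: algebra_simps)
    then have "qmap u (g - b) = n" using a qmap_eq_iff by blast
    then have "g - b \<in> M0" using nq(1) unfolding M0_def by simp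
    moreover have "g = (g - b) + b" by simp
    ultimately show "g \<in> setsum M0 W" unfolding setsum_def using b(1) by blast
  qed simp
  ultimately show ?thesis unfolding Fam_def by blast
qed

end

context LS begin

abbreviation "QQ \<equiv> qmap u ` calW u W \<union> qmap u ` scrW1 u W"

lemma X: assumes "M \<in> Fam" "m \<in> M" shows "\<exists>m3\<in>M. m3 - m \<in> latt u \<and> (\<forall>v. m3 \<noteq> m + c *s v)"
proof (rule ccontr)
  assume H0: "\<not> ?thesis"
  have H: "\<exists>v. m3 = m + c *s v" if "m3 \<in> M" "m3 - m \<in> latt u" for m3
    using H0 that by blast
  have MM0: "M \<subseteq> M0" and MW: "setsum M W = UNIV" using assms(1) unfolding Fam_def by auto
  define n where "n = qmap u m"
  have nN: "n \<in> N" using MM0 assms(2) unfolding M0_def n_def by auto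
  obtain q where q: "q \<in> qmap u ` scrW1 u W"
    and qw: "\<forall>n'\<in>N - {n}. \<forall>q'\<in>QQ. setsum n q \<noteq> setsum n' q'" using wit nN by blast
  obtain s where s: "s \<in> scrW1 u W" "q = qmap u s" using q by blast
  define e :: "int^'d" where "e = (\<chi> i. 1)"
  define g where "g j = m + s + (j * D) *s e" for j :: int
  have "\<exists>mj wj. mj \<in> M \<and> wj \<in> W \<and> g j = mj + wj" for j
  proof -
    have "g j \<in> setsum M W" using MW by simp
    then show ?thesis unfolding setsum_def by blast
  qed
  then obtain mf wf where mw: "\<And>j. mf j \<in> M" "\<And>j. wf j \<in> W" "\<And>j. g j = mf j + wf j"
    by metis
  have key: "(\<exists>v. mf j = m + c *s v) \<and> wf j \<in> scrW u W" for j
  proof -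
    have "(j * D) *s e = D *s (j *s e)" by (simp add: vector_smult_assoc mult.commute)
    then have ge: "g j - (m + s) \<in> latt u" unfolding g_def using Dl[of "j *s e"] by simp
    have q1: "qmap u (g j) = setsum n q"
      using ge qmap_eq_iff[of u "g j" "m + s"] setsum_qmap[of u m s] n_def s(2) by simp
    have q2: "qmap u (mf j) \<in> N" using MM0 mw(1)[of j] unfolding M0_def by auto
    have q3: "qmap u (wf j) \<in> QQ" using A mw(2)[of j] by blast
    have q4: "setsum (qmap u (mf j)) (qmap u (wf j)) = setsum n q"
      using setsum_qmap[of u "mf j" "wf j"] mw(3)[of j] q1 by simp
    have "qmap u (mf j) = n"
    proof (rule ccontr)
      assume "qmap u (mf j) \<noteq> n"
      then have "qmap u (mf j) \<in> N - {n}" using q2 by blast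
      then show False using qw q3 q4 by metis
    qed
    then have l1: "mf j - m \<in> latt u" unfolding n_def qmap_eq_iff .
    then have v: "\<exists>v. mf j = m + c *s v" using H mw(1) by blast
    have "wf j - s = (g j - (m + s)) - (mf j - m)" using mw(3)[of j] by (simp add: algebra_simps)
    moreover have "(g j - (m + s)) - (mf j - m) \<in> latt u" using latt_diff[OF ge l1] .
    ultimately have l2: "wf j - s \<in> latt u" by (simp only:)
    have "\<forall>z\<in>calW u W. wf j - z \<notin> latt u"
    proof (intro ballI notI)
      fix z assume z: "z \<in> calW u W" "wf j - z \<in> latt u"
      have "s - z = (wf j - z) - (wf j - s)" by simp
      then have "s - z \<in> latt u" using latt_diff[OF z(2) l2] by simp
      then show False using s(1) z(1) unfolding scrW1_def by blast
    qed
    then have "wf j \<in> scrW u W" using B mw(2) by blast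
    then show ?thesis using v by blast
  qed
  obtain vf where vf: "\<And>j. mf j = m + c *s vf j" using key by metis
  have inj: "inj_on wf {0..<k}"
  proof (rule inj_onI)
    fix j j' assume jj: "j \<in> {0..<k}" "j' \<in> {0..<k}" "wf j = wf j'"
    define i :: 'd where "i = undefined"
    have "g j - g j' = mf j - mf j'" using mw(3)[of j] mw(3)[of j'] jj(3) by simp
    then have "(g j - g j') $ i = (mf j - mf j') $ i" by simp
    then have "(j - j') * D = c * (vf j $ i - vf j' $ i)"
      unfolding g_def e_def using vf[of j] vf[of j'] by (simp add: algebra_simps)
    then have "D * (j - j') = D * (k * (vf j $ i - vf j' $ i))"
      unfolding c_def by (simp add: algebra_simps)
    then have eq: "j - j' = k * (vf j $ i - vf j' $ i)" using Dpos by simp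
    define t where "t = vf j $ i - vf j' $ i"
    have "t = 0"
    proof (rule ccontr)
      assume "t \<noteq> 0"
      then have "\<bar>k * t\<bar> \<ge> k" using kpos by (simp add: abs_mult)
      moreover have "\<bar>j - j'\<bar> < k" using jj(1,2) by auto
      ultimately show False using eq unfolding t_def by simp
    qed
    then show "j = j'" using eq unfolding t_def by simp
  qed
  have "wf ` {0..<k} \<subseteq> scrW u W" using key by blast
  then have "card (wf ` {0..<k}) \<le> card (scrW u W)" using finite_scrW by (rule card_mono[rotated])
  moreover have "card (wf ` {0..<k}) = nat k" using card_image[OF inj] by simp
  ultimately show False using kcard by linarith
qed

end

context LS begin

lemma minimal:
  assumes MF: "M \<in> Fam" and least: "\<forall>M'\<in>Fam. card (M \<inter> Box) \<le> card (M' \<inter> Box)"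
  shows "is_min_complement M W"
proof -
  have MM0: "M \<subseteq> M0" and PM: "Per M" and MW: "setsum M W = UNIV"
    using MF unfolding Fam_def by auto
  have ne: "M \<noteq> {}"
  proof
    assume "M = {}"
    then have "setsum M W = {}" unfolding setsum_def by simp
    then show False using MW by simp
  qed
  have compl: "is_complement M W" unfolding is_complement_def using ne MW by simp
  have "\<not> is_complement M' W" if sub: "M' \<subset> M" for M'
  proof
    assume "is_complement M' W"
    then have M'W: "setsum M' W = UNIV" unfolding is_complement_def by simp
    obtain m where m: "m \<in> M" "m \<notin> M'" using sub by blast
    define M1 where "M1 = {x \<in> M. \<forall>v. x \<noteq> m + c *s v}"
    have PM1: "Per M1" unfolding Per_def
    proof (intro ballI allI)
      fix x v assume x: "x \<in> M1"
      then have xM: "x + c *s v \<in> M" using PM unfolding Per_def M1_def by blast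
      have "x + c *s v \<noteq> m + c *s v'" for v'
      proof
        assume "x + c *s v = m + c *s v'"
        then have "x = m + c *s (v' - v)" by (simp add: vec_eq_iff algebra_simps)
        then show False using x unfolding M1_def by blast
      qed
      then show "x + c *s v \<in> M1" using xM unfolding M1_def by blast
    qed
    have M1M0: "M1 \<subseteq> M0" using MM0 unfolding M1_def by blast
    have "M1 \<inter> Box \<subset> M \<inter> Box"
    proof
      show "M1 \<inter> Box \<subseteq> M \<inter> Box" unfolding M1_def by blast
      have "rep m \<in> M \<inter> Box" using Per_rep[OF PM m(1)] rep_Box by blast
      moreover have "rep m \<notin> M1" using rep_eq[of m] unfolding M1_def by blast
      ultimately show "M1 \<inter> Box \<noteq> M \<inter> Box" by blast
    qed
    then have "card (M1 \<inter> Box) < card (M \<inter> Box)"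
      using finite_Box by (meson finite_Int psubset_card_mono)
    then have "M1 \<notin> Fam" using least by force
    then have "setsum M1 W \<noteq> UNIV" using M1M0 PM1 unfolding Fam_def by blast
    then obtain g where g: "g \<notin> setsum M1 W" by blast
    have "g \<in> setsum M W" using MW by simp
    then obtain m1 w where m1w: "m1 \<in> M" "w \<in> W" "g = m1 + w" unfolding setsum_def by blast
    have "m1 \<notin> M1" using g m1w unfolding setsum_def by blast
    then obtain v where v: "m1 = m + c *s v" using m1w(1) unfolding M1_def by blast
    define g' where "g' = m + w"
    have g'n: "g' \<notin> setsum M1 W"
    proof
      assume "g' \<in> setsum M1 W"
      then obtain m2 w2 where m2: "m2 \<in> M1" "w2 \<in> W" "g' = m2 + w2" unfolding setsum_def by blast
      have "m2 + c *s v \<in> M1" using PM1 m2(1) unfolding Per_def by blast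
      moreover have "g = (m2 + c *s v) + w2" using m1w(3) v m2(3) unfolding g'_def
        by (simp add: algebra_simps)
      ultimately show False using g m2(2) unfolding setsum_def by blast
    qed
    have "g' \<in> setsum M' W" using M'W by simp
    then obtain m' w' where m'w: "m' \<in> M'" "w' \<in> W" "g' = m' + w'" unfolding setsum_def by blast
    have m'M: "m' \<in> M" using m'w(1) sub by blast
    have "m' \<notin> M1" using g'n m'w unfolding setsum_def by blast
    then obtain v' where v': "m' = m + c *s v'" using m'M unfolding M1_def by blast
    have m'm: "m' \<noteq> m" using m'w(1) m(2) by blast
    have ww: "w - w' = c *s v'" using m'w(3) v' unfolding g'_def by (simp add: algebra_simps)
    show False
    proof (cases "\<exists>z\<in>calW u W. w - z \<in> latt u")
      case True
      then obtain z where z: "z \<in> calW u W" "w - z \<in> latt u" by blast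
      obtain m3 where m3: "m3 \<in> M" "m3 - m \<in> latt u" "\<forall>v. m3 \<noteq> m + c *s v"
        using X[OF MF m(1)] by blast
      have m3M1: "m3 \<in> M1" using m3 unfolding M1_def by blast
      have "g' - m3 - z = (w - z) - (m3 - m)" unfolding g'_def by (simp add: algebra_simps)
      moreover have "(w - z) - (m3 - m) \<in> latt u" using latt_diff[OF z(2) m3(2)] .
      ultimately have "g' - m3 - z \<in> latt u" by (simp only:)
      then obtain a where a: "g' - m3 - z = lc u a" unfolding latt_iff by blast
      define v4 where "v4 = lc u (\<lambda>i. - \<bar>a i\<bar>)"
      define m4 where "m4 = m3 + c *s v4"
      have m4M1: "m4 \<in> M1" using PM1 m3M1 unfolding Per_def m4_def by blast
      have cv4: "c *s v4 = lc u (\<lambda>i. c * - \<bar>a i\<bar>)" unfolding v4_def by (rule lc_scale)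
      have "g' - m4 - z = (g' - m3 - z) - c *s v4" unfolding m4_def by (simp add: algebra_simps)
      also have "\<dots> = lc u a - lc u (\<lambda>i. c * - \<bar>a i\<bar>)" using a cv4 by simp
      also have "\<dots> = lc u (\<lambda>i. a i - c * - \<bar>a i\<bar>)" by (rule lc_diff)
      finally have p: "g' - m4 - z = lc u (\<lambda>i. a i - c * - \<bar>a i\<bar>)" .
      have nn: "\<forall>i. a i - c * - \<bar>a i\<bar> \<ge> 0"
      proof
        fix i
        have "c * \<bar>a i\<bar> \<ge> \<bar>a i\<bar>" using cpos by (simp add: mult_le_cancel_right1)
        then show "a i - c * - \<bar>a i\<bar> \<ge> 0" by linarith
      qed
      have "g' - m4 - z \<in> cone u" unfolding cone_iff
        by (intro exI[of _ "\<lambda>i. a i - c * - \<bar>a i\<bar>"] conjI) (simp_all only: nn p simp_thms)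
      then have "z + (g' - m4 - z) \<in> W" using calW_W[OF z(1)] by blast
      moreover have "g' = m4 + (z + (g' - m4 - z))" by simp
      ultimately have "g' \<in> setsum M1 W" using m4M1 unfolding setsum_def by blast
      then show False using g'n by blast
    next
      case False
      then have wS: "w \<in> scrW u W" using B m1w(2) by blast
      have "\<forall>z\<in>calW u W. w' - z \<notin> latt u"
      proof (intro ballI notI)
        fix z assume z: "z \<in> calW u W" "w' - z \<in> latt u"
        have "w - z = (w' - z) + (w - w')" by simp
        moreover have "(w' - z) + (w - w') \<in> latt u" using latt_add[OF z(2)] ww cl by simp
        ultimately have "w - z \<in> latt u" by simp
        then show False using False z(1) by blast
      qed
      then have w'S: "w' \<in> scrW u W" using B m'w(2) by blast
      have "w = w'" using P2[OF wS w'S ww] .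
      then have "m' = m" using m'w(3) unfolding g'_def by simp
      then show False using m'm by blast
    qed
  qed
  then show ?thesis unfolding is_min_complement_def using compl by blast
qed

end

theorem lemma4p17:
  fixes u :: "'d::finite \<Rightarrow> int^'d" and W :: "(int^'d) set"
  assumes "zlin_indep u"
    and "eventually_periodic u W"
    and "admits_min_compl_quot u (qmap u ` scrW1 u W) (qmap u ` calW u W)"
  shows "\<exists>M. is_min_complement M W"
proof -
  define C1 where "C1 N \<longleftrightarrow> {setsum n q | n q. n \<in> N \<and> q \<in> qmap u ` calW u W \<union> qmap u ` scrW1 u W} = quot u" for N
  define C2 where "C2 N \<longleftrightarrow> (\<forall>n\<in>N. \<exists>q\<in>qmap u ` scrW1 u W. \<forall>n'\<in>N - {n}.
        \<forall>q'\<in>qmap u ` calW u W \<union> qmap u ` scrW1 u W. setsum n q \<noteq> setsum n' q')" for N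
  have "\<exists>N. N \<noteq> {} \<and> N \<subseteq> quot u \<and> C1 N \<and> C2 N"
    using assms(3) unfolding admits_min_compl_quot_def C1_def C2_def by (elim conjE) assumption
  then obtain N where N: "N \<noteq> {} \<and> N \<subseteq> quot u \<and> C1 N \<and> C2 N" by (rule exE)
  have Nq: "N \<subseteq> quot u" using N by (elim conjE)
  have cover: "{setsum n q | n q. n \<in> N \<and> q \<in> qmap u ` calW u W \<union> qmap u ` scrW1 u W} = quot u"
    using N unfolding C1_def by (elim conjE)
  have wit: "\<forall>n\<in>N. \<exists>q\<in>qmap u ` scrW1 u W. \<forall>n'\<in>N - {n}.
        \<forall>q'\<in>qmap u ` calW u W \<union> qmap u ` scrW1 u W. setsum n q \<noteq> setsum n' q'"
    using N unfolding C2_def by (elim conjE)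
  obtain D where D: "D > 0" "\<And>g. D *s g \<in> latt u" using full_rank[OF assms(1)] by blast
  define S where "S = scrW u W"
  have finS: "finite S" using assms(2) unfolding eventually_periodic_def scrW_def S_def by blast
  define T where "T = (\<lambda>(a, b, i). \<bar>(a - b) $ i\<bar>) ` (S \<times> S \<times> (UNIV :: 'd set))"
  have finT: "finite T" unfolding T_def using finS by simp
  define k where "k = 1 + int (card S) + (\<Sum>t\<in>T. t)"
  have Tnn: "\<And>t. t \<in> T \<Longrightarrow> t \<ge> 0" unfolding T_def by auto
  have sT: "(\<Sum>t\<in>T. t) \<ge> 0" using Tnn by (simp add: sum_nonneg)
  have kcard: "k > int (card (scrW u W))" unfolding k_def S_def[symmetric] using sT by simp
  have kdiff: "\<bar>(a - b) $ i\<bar> < k" if "a \<in> scrW u W" "b \<in> scrW u W" for a b i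
  proof -
    have "\<bar>(a - b) $ i\<bar> \<in> T" unfolding T_def S_def using that by force
    then have "\<bar>(a - b) $ i\<bar> \<le> (\<Sum>t\<in>T. t)" using finT Tnn by (intro member_le_sum) auto
    then show ?thesis unfolding k_def by simp
  qed
  interpret L: LS u W N D k
  proof
    show "zlin_indep u" by (rule assms(1))
    show "eventually_periodic u W" by (rule assms(2))
    show "N \<subseteq> quot u" by (rule Nq)
    show "{setsum n q | n q. n \<in> N \<and> q \<in> qmap u ` calW u W \<union> qmap u ` scrW1 u W} = quot u"
      by (rule cover)
    show "\<forall>n\<in>N. \<exists>q\<in>qmap u ` scrW1 u W. \<forall>n'\<in>N - {n}.
        \<forall>q'\<in>qmap u ` calW u W \<union> qmap u ` scrW1 u W. setsum n q \<noteq> setsum n' q'" by (rule wit)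
    show "D > 0" by (rule D(1))
    show "\<And>g. D *s g \<in> latt u" by (rule D(2))
    show "k > int (card (scrW u W))" by (rule kcard)
    show "\<And>a b i. a \<in> scrW u W \<Longrightarrow> b \<in> scrW u W \<Longrightarrow> \<bar>(a - b) $ i\<bar> < k" by (rule kdiff)
  qed
  have "\<exists>M. M \<in> L.Fam \<and> (\<forall>M'. M' \<in> L.Fam \<longrightarrow> card (M \<inter> L.Box) \<le> card (M' \<inter> L.Box))"
    by (rule ex_has_least_nat[where P="\<lambda>M. M \<in> L.Fam" and k="L.M0" and m="\<lambda>M. card (M \<inter> L.Box)"])
      (rule L.M0_Fam)
  then obtain M where M: "M \<in> L.Fam \<and> (\<forall>M'. M' \<in> L.Fam \<longrightarrow> card (M \<inter> L.Box) \<le> card (M' \<inter> L.Box))"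
    by (rule exE)
  have M1: "M \<in> L.Fam" using M by (elim conjE)
  have M2: "\<forall>M'\<in>L.Fam. card (M \<inter> L.Box) \<le> card (M' \<inter> L.Box)" using M by blast
  have "is_min_complement M W" by (rule L.minimal[OF M1 M2])
  then show ?thesis by (rule exI)
qed

end
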